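(* Let $d\ge 3$, $\lambda>0$, $\rho_0=o(1)$, $\mu=\rho_0/(d+\lambda)$, and let $a,b,c\ge0$ be a trajectory of \[ \dot a=-2\,\mathrm{sgn}(g_{w_\star})\sqrt a,\quad \dot b=-2\,\mathrm{sgn}(g_v)\sqrt b,\quad \dot c=-2\,\mathrm{sgn}(g_\perp)\sqrt c, \] with $a(0)=b(0)=c(0)=\mu$, where $r=a+(1+\lambda)b+(d-2)c$, $g_{w_\star}=4(r+2a-3)$, $g_v=4(1+\lambda)(r+2(1+\lambda)b-1)$, $g_\perp=4(r+2c-1)$, $\mathrm{sgn}(0)=0$. Fix $\rho\in(0,1/12)$ and let $T_2'=\inf\{t\ge0:a(t)\ge\rho\}$. Then for all $t\ge T_2'$, \[ a(t)\ge\rho,\quad b(t)\le\frac{1}{3(1+\lambda)},\quad (d-2)c(t)^2\le\frac1{d-2}, \] and consequently \[ 1-\mathrm{Align}(t)\le\frac{1}{2\rho^2}\Big(\frac{1}{9(1+\lambda)^2}+\frac{1}{d-2}\Big). \] In particular, if $d\to\infty$ and $\lambda=\lambda(d)\to\infty$, then $\sup_{t\ge T_2'}(1-\mathrm{Align}(t))\to0$.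
   Context: These ODEs describe the population spectral gradient flow $\dot W=-\mathrm{polar}(\nabla_W\mathcal L(W))$ for the phase-retrieval model $y=(x^\top w_\star)^2+\nu$, $x\sim\mathcal N(0,I_d+\lambda vv^\top)$ with $v\perp w_\star$ unit vectors, network $f_W(x)=\sum_{j=1}^d(w_j^\top x)^2$, in the coordinates $WW^\top=a\,w_\star w_\star^\top+b\,vv^\top+c(I-w_\star w_\star^\top-vv^\top)$; $\mathrm{polar}(A)=A(A^\top A)^{-1/2}$. The alignment is $\mathrm{Align}(t)=a(t)/\sqrt{a(t)^2+b(t)^2+(d-2)c(t)^2}$. $d$ is taken large. *)

theory Defs
  imports "HOL-Analysis.Analysis"
begin

text \<open>Set-valued sign (Filippov convexification): the value of sgn at a discontinuity
  point 0 is replaced by the interval [-1,1]; away from 0 it is the usual sign.\<close>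
definition sgn_set :: "real \<Rightarrow> real set" where
  "sgn_set x = (if x > 0 then {1} else if x < 0 then {-1} else {-1..1})"

definition r_fn :: "nat \<Rightarrow> real \<Rightarrow> real \<Rightarrow> real \<Rightarrow> real \<Rightarrow> real" where
  "r_fn d lam a b c = a + (1 + lam) * b + (real d - 2) * c"

definition g_star :: "nat \<Rightarrow> real \<Rightarrow> real \<Rightarrow> real \<Rightarrow> real \<Rightarrow> real" where
  "g_star d lam a b c = 4 * (r_fn d lam a b c + 2 * a - 3)"

definition g_v :: "nat \<Rightarrow> real \<Rightarrow> real \<Rightarrow> real \<Rightarrow> real \<Rightarrow> real" where
  "g_v d lam a b c = 4 * (1 + lam) * (r_fn d lam a b c + 2 * (1 + lam) * b - 1)"

definition g_perp :: "nat \<Rightarrow> real \<Rightarrow> real \<Rightarrow> real \<Rightarrow> real \<Rightarrow> real" where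
  "g_perp d lam a b c = 4 * (r_fn d lam a b c + 2 * c - 1)"

text \<open>(a,b,c) is a trajectory on [0,\<infinity>) of
  a' = -2 sgn(g_star) sqrt a, b' = -2 sgn(g_v) sqrt b, c' = -2 sgn(g_perp) sqrt c,
  started at a(0)=b(0)=c(0)=mu, in the integral (absolutely continuous) sense, with the
  sign at 0 understood in the Filippov sense.\<close>
definition is_traj ::
  "nat \<Rightarrow> real \<Rightarrow> real \<Rightarrow> (real \<Rightarrow> real) \<Rightarrow> (real \<Rightarrow> real) \<Rightarrow> (real \<Rightarrow> real) \<Rightarrow> bool" where
  "is_traj d lam mu a b c \<longleftrightarrow>
     a 0 = mu \<and> b 0 = mu \<and> c 0 = mu \<and>
     (\<forall>t\<ge>0. a t \<ge> 0 \<and> b t \<ge> 0 \<and> c t \<ge> 0) \<and>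
     (\<exists>\<alpha> \<beta> \<gamma> :: real \<Rightarrow> real.
        (\<forall>t\<ge>0. \<alpha> t \<in> (\<lambda>s. -2 * s * sqrt (a t)) ` sgn_set (g_star d lam (a t) (b t) (c t))) \<and>
        (\<forall>t\<ge>0. \<beta> t \<in> (\<lambda>s. -2 * s * sqrt (b t)) ` sgn_set (g_v d lam (a t) (b t) (c t))) \<and>
        (\<forall>t\<ge>0. \<gamma> t \<in> (\<lambda>s. -2 * s * sqrt (c t)) ` sgn_set (g_perp d lam (a t) (b t) (c t))) \<and>
        (\<forall>t\<ge>0. (\<alpha> has_integral (a t - mu)) {0..t}) \<and>
        (\<forall>t\<ge>0. (\<beta> has_integral (b t - mu)) {0..t}) \<and>
        (\<forall>t\<ge>0. (\<gamma> has_integral (c t - mu)) {0..t}))"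

definition align :: "nat \<Rightarrow> real \<Rightarrow> real \<Rightarrow> real \<Rightarrow> real" where
  "align d a b c = a / sqrt (a\<^sup>2 + b\<^sup>2 + (real d - 2) * c\<^sup>2)"

text \<open>T_2' = inf {t \<ge> 0 : a(t) \<ge> rho} (used only when this set is nonempty).\<close>
definition T2' :: "(real \<Rightarrow> real) \<Rightarrow> real \<Rightarrow> real" where
  "T2' a rho = Inf {t. 0 \<le> t \<and> rho \<le> a t}"

end

theory Submission
  imports Defs
begin

lemma traj_cont:
  fixes f \<phi> :: "real \<Rightarrow> real"
  assumes int: "\<forall>t\<ge>0. (\<phi> has_integral (f t - m)) {0..t}" and T: "0 \<le> T"
  shows "continuous_on {0..T} f"
proof -
  have "\<phi> integrable_on {0..T}" using int T by blast
  hence c: "continuous_on {0..T} (\<lambda>x. integral {0..x} \<phi>)"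
    by (rule indefinite_integral_continuous_1)
  have "continuous_on {0..T} (\<lambda>x. m + integral {0..x} \<phi>)"
    by (intro continuous_intros c)
  moreover have "m + integral {0..x} \<phi> = f x" if "x \<in> {0..T}" for x
  proof -
    have "(\<phi> has_integral (f x - m)) {0..x}" using int that by simp
    hence "integral {0..x} \<phi> = f x - m" by (rule integral_unique)
    thus ?thesis by simp
  qed
  ultimately show ?thesis using continuous_on_cong[of "{0..T}" "{0..T}" "\<lambda>x. m + integral {0..x} \<phi>" f] by simp
qed

lemma traj_diff:
  fixes f \<phi> :: "real \<Rightarrow> real"
  assumes int: "\<forall>t\<ge>0. (\<phi> has_integral (f t - m)) {0..t}" and "0 \<le> s" "s \<le> t"
  shows "(\<phi> has_integral (f t - f s)) {s..t}"
proof -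
  have t0: "0 \<le> t" using assms by linarith
  have "\<phi> integrable_on {0..t}" using int t0 by blast
  hence "\<phi> integrable_on {s..t}" using integrable_subinterval_real assms by fastforce
  then obtain j where j: "(\<phi> has_integral j) {s..t}" by blast
  have s0: "(\<phi> has_integral (f s - m)) {0..s}" using int assms(2) by simp
  have "(\<phi> has_integral ((f s - m) + j)) {0..t}"
    by (rule has_integral_combine[OF assms(2,3) s0 j])
  moreover have "(\<phi> has_integral (f t - m)) {0..t}" using int t0 by simp
  ultimately have "(f s - m) + j = f t - m" by (rule has_integral_unique)
  hence "j = f t - f s" by simp
  thus ?thesis using j by simp
qed

lemma barrier:
  fixes f \<phi> :: "real \<Rightarrow> real"
  assumes int: "\<forall>t\<ge>0. (\<phi> has_integral (f t - m)) {0..t}"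
    and sg: "\<forall>u\<ge>0. f u > K \<longrightarrow> \<phi> u \<le> 0"
    and t0: "0 \<le> t0" "f t0 \<le> K" and tt: "t0 \<le> t"
  shows "f t \<le> K"
proof (rule ccontr)
  assume "\<not> f t \<le> K" hence ft: "f t > K" by simp
  have cont: "continuous_on {t0..t} f"
    using traj_cont[OF int, of t] t0 tt continuous_on_subset by fastforce
  define S where "S = {t0..t} \<inter> f -` {..K}"
  have cS: "closed S" unfolding S_def by (rule continuous_closed_preimage[OF cont]) auto
  have ne: "S \<noteq> {}" using t0 tt unfolding S_def by auto
  have bd: "bdd_above S" unfolding S_def by (rule bdd_aboveI[of _ t]) auto
  define s where "s = Sup S"
  have sS: "s \<in> S" unfolding s_def using closed_contains_Sup[OF ne bd cS] .
  hence s1: "t0 \<le> s" "s \<le> t" "f s \<le> K" unfolding S_def by auto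
  have gt: "f u > K" if "u \<in> {s<..t}" for u
  proof (rule ccontr)
    assume "\<not> f u > K"
    hence "u \<in> S" using that s1 unfolding S_def by auto
    hence "u \<le> s" unfolding s_def using bd by (rule cSup_upper)
    thus False using that by auto
  qed
  have I: "(\<phi> has_integral (f t - f s)) {s..t}"
    using traj_diff[OF int, of s t] s1 t0 by simp
  define \<psi> where "\<psi> = (\<lambda>x. if x = s then 0 else \<phi> x)"
  have I2: "(\<psi> has_integral (f t - f s)) {s..t}"
    by (rule has_integral_spike[OF negligible_sing[of s] _ I]) (simp add: \<psi>_def)
  have "\<psi> x \<le> 0" if "x \<in> {s..t}" for x
  proof (cases "x = s")
    case False
    hence "x \<in> {s<..t}" using that by auto
    thus ?thesis using gt sg s1 t0 False unfolding \<psi>_def by auto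
  qed (simp add: \<psi>_def)
  hence "f t - f s \<le> 0" using has_integral_le[OF I2 has_integral_0] by blast
  thus False using ft s1 by simp
qed

lemma align_aux:
  fixes a q :: real assumes a: "a > 0" and q: "q \<ge> 0"
  shows "1 - a / sqrt (a\<^sup>2 + q) \<le> q / (2 * a\<^sup>2)"
proof (cases "q \<le> 2 * a\<^sup>2")
  case False
  have "a / sqrt (a\<^sup>2 + q) \<ge> 0" using a q by simp
  moreover have "q / (2 * a\<^sup>2) \<ge> 1" using False a by simp
  ultimately show ?thesis by linarith
next
  case True
  define y where "y = q / a\<^sup>2"
  have y: "0 \<le> y" "y \<le> 2" using True a q by (auto simp: y_def field_simps)
  have qa: "q = y * a\<^sup>2" using a by (simp add: y_def)
  have sq: "sqrt (a\<^sup>2 + q) = a * sqrt (1 + y)"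
  proof -
    have "a\<^sup>2 + q = a\<^sup>2 * (1 + y)" by (simp add: qa algebra_simps)
    hence "sqrt (a\<^sup>2 + q) = sqrt (a\<^sup>2) * sqrt (1 + y)" by (simp add: real_sqrt_mult)
    thus ?thesis using a by simp
  qed
  have p: "(1 - y/2)\<^sup>2 * (1 + y) \<le> 1"
  proof -
    have "(1 - y/2)\<^sup>2 * (1 + y) = 1 - y\<^sup>2 * (3 - y) / 4" by (simp add: power2_eq_square field_simps)
    moreover have "y\<^sup>2 * (3 - y) \<ge> 0" using y by simp
    ultimately show ?thesis by linarith
  qed
  have "(1 - y/2) * sqrt (1 + y) \<le> 1"
  proof -
    have "((1 - y/2) * sqrt (1 + y))\<^sup>2 = (1 - y/2)\<^sup>2 * (1 + y)" using y by (simp add: power_mult_distrib)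
    hence "((1 - y/2) * sqrt (1 + y))\<^sup>2 \<le> 1\<^sup>2" using p by simp
    from power2_le_imp_le[OF this] show ?thesis by simp
  qed
  hence "1 - y/2 \<le> 1 / sqrt (1 + y)" using y by (simp add: field_simps)
  moreover have "a / sqrt (a\<^sup>2 + q) = 1 / sqrt (1 + y)" using a y by (simp add: sq)
  moreover have "q / (2 * a\<^sup>2) = y / 2" using a by (simp add: y_def)
  ultimately show ?thesis by linarith
qed


lemma sg_pos: "x \<ge> 0 \<Longrightarrow> g > 0 \<Longrightarrow> v \<in> (\<lambda>s. -2 * s * sqrt x) ` sgn_set g \<Longrightarrow> v \<le> 0"
  by (auto simp: sgn_set_def)
lemma sg_neg: "x \<ge> 0 \<Longrightarrow> g < 0 \<Longrightarrow> v \<in> (\<lambda>s. -2 * s * sqrt x) ` sgn_set g \<Longrightarrow> v \<ge> 0"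
  by (auto simp: sgn_set_def)

lemma fin_part:
  fixes lam rho :: real and d :: nat
  assumes dr: "real d \<ge> 3" and lam: "0 < lam" and rho: "0 < rho" "rho < 1/12"
   and at: "rho \<le> a t" and bt: "b t \<le> 1 / (3 * (1 + lam))" and b0: "0 \<le> b t" "0 \<le> c t"
   and ct: "c t \<le> 1 / real d"
  shows "rho \<le> a t \<and> b t \<le> 1 / (3 * (1 + lam)) \<and>
           (real d - 2) * (c t)\<^sup>2 \<le> 1 / (real d - 2) \<and>
           1 - align d (a t) (b t) (c t)
             \<le> 1 / (2 * rho\<^sup>2) * (1 / (9 * (1 + lam)\<^sup>2) + 1 / (real d - 2))"
proof -
  have c2: "(c t)\<^sup>2 \<le> (1 / real d)\<^sup>2" using ct b0 by (intro power_mono) auto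
  have dc1: "(real d - 2) * c t \<le> 1"
  proof -
    have "(real d - 2) * c t \<le> (real d - 2) * (1 / real d)"
      using ct dr by (intro mult_left_mono) auto
    also have "\<dots> = (real d - 2) / real d" by simp
    also have "\<dots> \<le> 1" using dr by (subst divide_le_eq_1) auto
    finally show ?thesis .
  qed
  have cd2: "c t \<le> 1 / (real d - 2)"
  proof -
    have "1 / real d \<le> 1 / (real d - 2)" using dr by (intro divide_left_mono) auto
    thus ?thesis using ct by linarith
  qed
  have cc: "(real d - 2) * (c t)\<^sup>2 \<le> 1 / (real d - 2)"
  proof -
    have "(real d - 2) * (c t)\<^sup>2 = ((real d - 2) * c t) * c t" by (simp add: power2_eq_square)
    also have "\<dots> \<le> 1 * (1 / (real d - 2))"
      using dc1 cd2 b0 by (intro mult_mono) auto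
    finally show ?thesis by simp
  qed
  have b2: "(b t)\<^sup>2 \<le> 1 / (9 * (1 + lam)\<^sup>2)"
  proof -
    have "(b t)\<^sup>2 \<le> (1 / (3 * (1 + lam)))\<^sup>2" using bt b0 by (intro power_mono) auto
    moreover have "(1 / (3 * (1 + lam)))\<^sup>2 = 1 / (9 * (1 + lam)\<^sup>2)"
      by (simp add: power_one_over) (simp add: power2_eq_square algebra_simps)
    ultimately show ?thesis by simp
  qed
  define q where "q = (b t)\<^sup>2 + (real d - 2) * (c t)\<^sup>2"
  define B where "B = 1 / (9 * (1 + lam)\<^sup>2) + 1 / (real d - 2)"
  have q0: "q \<ge> 0" using dr unfolding q_def by simp
  have qB: "q \<le> B" using b2 cc unfolding q_def B_def by linarith
  have apos: "a t > 0" using at rho by linarith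
  have eqq: "(a t)\<^sup>2 + (b t)\<^sup>2 + (real d - 2) * (c t)\<^sup>2 = (a t)\<^sup>2 + q"
    unfolding q_def by (simp only: add.assoc)
  have A1: "1 - align d (a t) (b t) (c t) \<le> q / (2 * (a t)\<^sup>2)"
    unfolding align_def eqq by (rule align_aux[OF apos q0])
  have r2: "rho\<^sup>2 \<le> (a t)\<^sup>2" using at rho by (intro power_mono) auto
  have r0: "0 < rho\<^sup>2" using rho by simp
  have A2: "q / (2 * (a t)\<^sup>2) \<le> q / (2 * rho\<^sup>2)"
  proof (rule divide_left_mono)
    show "2 * rho\<^sup>2 \<le> 2 * (a t)\<^sup>2" using r2 by simp
    show "0 \<le> q" using q0 .
    show "0 < 2 * (a t)\<^sup>2 * (2 * rho\<^sup>2)" using r0 apos by simp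
  qed
  have A3: "q / (2 * rho\<^sup>2) \<le> B / (2 * rho\<^sup>2)"
    using qB r0 by (intro divide_right_mono) auto
  have "B / (2 * rho\<^sup>2) = 1 / (2 * rho\<^sup>2) * B" by simp
  hence fin: "1 - align d (a t) (b t) (c t) \<le> 1 / (2 * rho\<^sup>2) * B" using A1 A2 A3 by linarith
  have fin': "1 - align d (a t) (b t) (c t) \<le> 1 / (2 * rho\<^sup>2) * (1 / (9 * (1 + lam)\<^sup>2) + 1 / (real d - 2))"
    using fin unfolding B_def .
  from at bt cc fin' show ?thesis by (intro conjI)
qed

lemma core:
  fixes a b c :: "real \<Rightarrow> real" and lam mu rho t :: real and d :: nat
  assumes d: "3 \<le> d" and lam: "0 < lam" and mu1: "mu \<le> 1 / real d"
    and mu2: "mu \<le> 1 / (3 * (1 + lam))"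
    and tr: "is_traj d lam mu a b c" and rho: "0 < rho" "rho < 1/12"
    and ne: "{s. 0 \<le> s \<and> rho \<le> a s} \<noteq> {}" and tT: "T2' a rho \<le> t"
  shows "rho \<le> a t \<and> b t \<le> 1 / (3 * (1 + lam)) \<and>
           (real d - 2) * (c t)\<^sup>2 \<le> 1 / (real d - 2) \<and>
           1 - align d (a t) (b t) (c t)
             \<le> 1 / (2 * rho\<^sup>2) * (1 / (9 * (1 + lam)\<^sup>2) + 1 / (real d - 2))"
proof -
  have dr: "real d \<ge> 3" using d by simp
  note T = tr[unfolded is_traj_def]
  have i0: "a 0 = mu" "b 0 = mu" "c 0 = mu" using T by (simp_all only:)
  note nn = T[THEN conjunct2, THEN conjunct2, THEN conjunct2, THEN conjunct1]
  note ex = T[THEN conjunct2, THEN conjunct2, THEN conjunct2, THEN conjunct2]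
  from ex obtain \<alpha> \<beta> \<gamma> where H:
        "(\<forall>t\<ge>0. \<alpha> t \<in> (\<lambda>s. -2 * s * sqrt (a t)) ` sgn_set (g_star d lam (a t) (b t) (c t))) \<and>
        (\<forall>t\<ge>0. \<beta> t \<in> (\<lambda>s. -2 * s * sqrt (b t)) ` sgn_set (g_v d lam (a t) (b t) (c t))) \<and>
        (\<forall>t\<ge>0. \<gamma> t \<in> (\<lambda>s. -2 * s * sqrt (c t)) ` sgn_set (g_perp d lam (a t) (b t) (c t))) \<and>
        (\<forall>t\<ge>0. (\<alpha> has_integral (a t - mu)) {0..t}) \<and>
        (\<forall>t\<ge>0. (\<beta> has_integral (b t - mu)) {0..t}) \<and>
        (\<forall>t\<ge>0. (\<gamma> has_integral (c t - mu)) {0..t})" by (elim exE)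
  note sa = H[THEN conjunct1]
  note sb = H[THEN conjunct2, THEN conjunct1]
  note sc = H[THEN conjunct2, THEN conjunct2, THEN conjunct1]
  note ia = H[THEN conjunct2, THEN conjunct2, THEN conjunct2, THEN conjunct1]
  note ib = H[THEN conjunct2, THEN conjunct2, THEN conjunct2, THEN conjunct2, THEN conjunct1]
  note ic = H[THEN conjunct2, THEN conjunct2, THEN conjunct2, THEN conjunct2, THEN conjunct2]
  have cb: "c u \<le> 1 / real d" if u: "0 \<le> u" for u
  proof (rule barrier[OF ic _ order_refl _ u])
    show "c 0 \<le> 1 / real d" using i0 mu1 by simp
    show "\<forall>u\<ge>0. c u > 1 / real d \<longrightarrow> \<gamma> u \<le> 0"
    proof (intro allI impI)
      fix u :: real assume u: "0 \<le> u" and cu: "c u > 1 / real d"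
      have "real d * c u > 1" using cu dr by (simp add: field_simps)
      moreover have "(real d - 2) * c u + 2 * c u = real d * c u" by algebra
      moreover have "(1 + lam) * b u \<ge> 0" using nn u lam by simp
      moreover have "a u \<ge> 0" "c u \<ge> 0" using nn u by auto
      moreover have "g_perp d lam (a u) (b u) (c u) = 4 * (a u + (1 + lam) * b u + ((real d - 2) * c u + 2 * c u) - 1)"
        unfolding g_perp_def r_fn_def by (simp add: algebra_simps)
      ultimately have "a u + (1 + lam) * b u + ((real d - 2) * c u + 2 * c u) - 1 > 0" "g_perp d lam (a u) (b u) (c u) = 4 * (a u + (1 + lam) * b u + ((real d - 2) * c u + 2 * c u) - 1)"
        by linarith+
      hence "g_perp d lam (a u) (b u) (c u) > 0" by simp
      thus "\<gamma> u \<le> 0" using sg_pos[of "c u"] sc u nn by blast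
    qed
  qed
  have bb: "b u \<le> 1 / (3 * (1 + lam))" if u: "0 \<le> u" for u
  proof (rule barrier[OF ib _ order_refl _ u])
    show "b 0 \<le> 1 / (3 * (1 + lam))" using i0 mu2 by simp
    show "\<forall>u\<ge>0. b u > 1 / (3 * (1 + lam)) \<longrightarrow> \<beta> u \<le> 0"
    proof (intro allI impI)
      fix u :: real assume u: "0 \<le> u" and cu: "b u > 1 / (3 * (1 + lam))"
      have "3 * (1 + lam) * b u > 1" using cu lam by (simp add: field_simps)
      moreover have "(real d - 2) * c u \<ge> 0" using nn u dr by simp
      moreover have "a u \<ge> 0" "b u \<ge> 0" using nn u by auto
      moreover have "(1 + lam) * b u \<ge> 0" using nn u lam by simp
      moreover have "r_fn d lam (a u) (b u) (c u) + 2 * (1 + lam) * b u - 1 = a u + 3 * (1 + lam) * b u + (real d - 2) * c u - 1"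
        unfolding r_fn_def by (simp add: algebra_simps)
      ultimately have "r_fn d lam (a u) (b u) (c u) + 2 * (1 + lam) * b u - 1 > 0"
        by linarith
      hence "g_v d lam (a u) (b u) (c u) > 0"
        using lam unfolding g_v_def by simp
      thus "\<beta> u \<le> 0" using sg_pos[of "b u"] sb u nn by blast
    qed
  qed
  define S where "S = {s. 0 \<le> s \<and> rho \<le> a s}"
  obtain s1 where s1: "s1 \<in> S" using ne S_def by blast
  hence s10: "0 \<le> s1" unfolding S_def by simp
  define S' where "S' = {0..s1} \<inter> a -` {rho..}"
  have cS': "closed S'" unfolding S'_def
    by (rule continuous_closed_preimage[OF traj_cont[OF ia s10]]) auto
  have s1S': "s1 \<in> S'" using s1 unfolding S_def S'_def by auto
  have bS': "bdd_below S'" unfolding S'_def by (rule bdd_belowI[of _ 0]) auto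
  have IS': "Inf S' \<in> S'" using closed_contains_Inf[OF _ bS' cS'] s1S' by blast
  have bS: "bdd_below S" unfolding S_def by (rule bdd_belowI[of _ 0]) auto
  have "Inf S' \<le> x" if "x \<in> S" for x
  proof (cases "x \<le> s1")
    case True
    hence "x \<in> S'" using that unfolding S_def S'_def by auto
    thus ?thesis using bS' by (rule cInf_lower)
  next
    case False
    have "Inf S' \<le> s1" using s1S' bS' by (rule cInf_lower)
    thus ?thesis using False by simp
  qed
  hence "Inf S' \<le> Inf S" using ne S_def by (intro cInf_greatest) auto
  moreover have "Inf S \<le> Inf S'" using IS' bS unfolding S_def S'_def by (intro cInf_lower) auto
  ultimately have "Inf S = Inf S'" by simp
  moreover have "T2' a rho = Inf S" unfolding T2'_def S_def by simp
  moreover have "S' \<subseteq> S" unfolding S_def S'_def by auto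
  ultimately have TS: "T2' a rho \<in> S" using IS' by auto
  hence T0: "0 \<le> T2' a rho" "rho \<le> a (T2' a rho)" unfolding S_def by auto
  have t0: "0 \<le> t" using T0 tT by linarith
  have ia': "\<forall>t\<ge>0. ((\<lambda>x. - \<alpha> x) has_integral ((- a t) - (- mu))) {0..t}"
  proof (intro allI impI)
    fix t :: real assume "0 \<le> t"
    hence "(\<alpha> has_integral (a t - mu)) {0..t}" using ia by blast
    from has_integral_neg[OF this] show "((\<lambda>x. - \<alpha> x) has_integral ((- a t) - (- mu))) {0..t}" by simp
  qed
  have "- a t \<le> - rho"
  proof (rule barrier[OF ia' _ T0(1) _ tT])
    show "- a (T2' a rho) \<le> - rho" using T0 by simp
    show "\<forall>u\<ge>0. - a u > - rho \<longrightarrow> - \<alpha> u \<le> 0"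
    proof (intro allI impI)
      fix u :: real assume u: "0 \<le> u" and au: "- a u > - rho"
      have "(1 + lam) * b u \<le> 1/3" using bb[OF u] lam by (simp add: field_simps)
      moreover have "(real d - 2) * c u \<le> 1"
      proof -
        have "(real d - 2) * c u \<le> (real d - 2) * (1 / real d)"
          using cb[OF u] dr by (intro mult_left_mono) auto
        also have "\<dots> \<le> 1" using dr by (simp add: field_simps)
        finally show ?thesis .
      qed
      moreover have "g_star d lam (a u) (b u) (c u) = 4 * (3 * a u + (1 + lam) * b u + (real d - 2) * c u - 3)"
        unfolding g_star_def r_fn_def by (simp add: algebra_simps)
      ultimately have "3 * a u + (1 + lam) * b u + (real d - 2) * c u - 3 < 0"
          "g_star d lam (a u) (b u) (c u) = 4 * (3 * a u + (1 + lam) * b u + (real d - 2) * c u - 3)"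
        using au rho by linarith+
      hence "g_star d lam (a u) (b u) (c u) < 0" by simp
      hence "\<alpha> u \<ge> 0" using sg_neg[of "a u"] sa u nn by blast
      thus "- \<alpha> u \<le> 0" by simp
    qed
  qed
  hence at: "rho \<le> a t" by simp
  have bt: "b t \<le> 1 / (3 * (1 + lam))" using bb t0 .
  have b0: "0 \<le> b t" "0 \<le> c t" using nn t0 by auto
  have ct: "c t \<le> 1 / real d" using cb t0 .
  show ?thesis using fin_part[where a=a and b=b and c=c and t=t, OF dr lam rho at bt b0 ct] .
qed

lemma mu_bounds:
  fixes d :: nat and lam rho0 :: real
  assumes d: "3 \<le> d" and lam: "0 < lam" and r0: "0 < rho0" "rho0 < 1/3"
  shows "rho0 / (real d + lam) \<le> 1 / real d" "rho0 / (real d + lam) \<le> 1 / (3 * (1 + lam))"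
proof -
  have dr: "real d \<ge> 3" using d by simp
  have p: "real d + lam > 0" using dr lam by linarith
  have "rho0 * real d \<le> 1 * (real d + lam)"
    using r0 dr lam by (intro mult_mono) auto
  thus "rho0 / (real d + lam) \<le> 1 / real d" using p dr by (simp add: divide_simps)
  have "rho0 * (3 * (1 + lam)) \<le> 1 * (real d + lam)"
  proof -
    have "rho0 * (3 * (1 + lam)) = (3 * rho0) * (1 + lam)" by simp
    also have "\<dots> \<le> 1 * (1 + lam)" using r0 lam by (intro mult_right_mono) auto
    also have "\<dots> \<le> 1 * (real d + lam)" using dr by simp
    finally show ?thesis .
  qed
  thus "rho0 / (real d + lam) \<le> 1 / (3 * (1 + lam))" using p lam by (simp add: divide_simps)
qed

theorem propositionC4:
  shows
  "(\<forall>rho::real. 0 < rho \<and> rho < 1/12 \<longrightarrow>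
      (\<exists>eps>0. \<forall>(d::nat) (lam::real) (rho0::real) a b c (t::real).
         3 \<le> d \<longrightarrow> 0 < lam \<longrightarrow> 0 < rho0 \<longrightarrow> rho0 < eps \<longrightarrow>
         is_traj d lam (rho0 / (real d + lam)) a b c \<longrightarrow>
         {s. 0 \<le> s \<and> rho \<le> a s} \<noteq> {} \<longrightarrow> T2' a rho \<le> t \<longrightarrow>
           rho \<le> a t \<and> b t \<le> 1 / (3 * (1 + lam)) \<and>
           (real d - 2) * (c t)\<^sup>2 \<le> 1 / (real d - 2) \<and>
           1 - align d (a t) (b t) (c t)
             \<le> 1 / (2 * rho\<^sup>2) * (1 / (9 * (1 + lam)\<^sup>2) + 1 / (real d - 2))))
   \<and>
   (\<forall>rho::real. 0 < rho \<and> rho < 1/12 \<longrightarrow>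
      (\<forall>(D::nat \<Rightarrow> nat) (L::nat \<Rightarrow> real) (R0::nat \<Rightarrow> real)
         (A::nat \<Rightarrow> real \<Rightarrow> real) (B::nat \<Rightarrow> real \<Rightarrow> real) (C::nat \<Rightarrow> real \<Rightarrow> real).
         filterlim D at_top sequentially \<longrightarrow> filterlim L at_top sequentially \<longrightarrow>
         R0 \<longlonglongrightarrow> 0 \<longrightarrow>
         (\<forall>n. 3 \<le> D n \<and> 0 < L n \<and> 0 < R0 n \<and>
              is_traj (D n) (L n) (R0 n / (real (D n) + L n)) (A n) (B n) (C n)) \<longrightarrow>
         (\<forall>e>0. \<forall>\<^sub>F n in sequentially. \<forall>t.
              {s. 0 \<le> s \<and> rho \<le> A n s} \<noteq> {} \<longrightarrow> T2' (A n) rho \<le> t \<longrightarrow>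
              1 - align (D n) (A n t) (B n t) (C n t) \<le> e)))"
proof (rule conjI)
  show "\<forall>rho::real. 0 < rho \<and> rho < 1/12 \<longrightarrow>
      (\<exists>eps>0. \<forall>(d::nat) (lam::real) (rho0::real) a b c (t::real).
         3 \<le> d \<longrightarrow> 0 < lam \<longrightarrow> 0 < rho0 \<longrightarrow> rho0 < eps \<longrightarrow>
         is_traj d lam (rho0 / (real d + lam)) a b c \<longrightarrow>
         {s. 0 \<le> s \<and> rho \<le> a s} \<noteq> {} \<longrightarrow> T2' a rho \<le> t \<longrightarrow>
           rho \<le> a t \<and> b t \<le> 1 / (3 * (1 + lam)) \<and>
           (real d - 2) * (c t)\<^sup>2 \<le> 1 / (real d - 2) \<and>
           1 - align d (a t) (b t) (c t)
             \<le> 1 / (2 * rho\<^sup>2) * (1 / (9 * (1 + lam)\<^sup>2) + 1 / (real d - 2)))"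
  proof (intro allI impI)
    fix rho :: real assume rho: "0 < rho \<and> rho < 1/12"
    show "\<exists>eps>0. \<forall>(d::nat) (lam::real) (rho0::real) a b c (t::real).
         3 \<le> d \<longrightarrow> 0 < lam \<longrightarrow> 0 < rho0 \<longrightarrow> rho0 < eps \<longrightarrow>
         is_traj d lam (rho0 / (real d + lam)) a b c \<longrightarrow>
         {s. 0 \<le> s \<and> rho \<le> a s} \<noteq> {} \<longrightarrow> T2' a rho \<le> t \<longrightarrow>
           rho \<le> a t \<and> b t \<le> 1 / (3 * (1 + lam)) \<and>
           (real d - 2) * (c t)\<^sup>2 \<le> 1 / (real d - 2) \<and>
           1 - align d (a t) (b t) (c t)
             \<le> 1 / (2 * rho\<^sup>2) * (1 / (9 * (1 + lam)\<^sup>2) + 1 / (real d - 2))"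
    proof (rule exI[of _ "1/3"], intro conjI allI impI)
      show "(0::real) < 1/3" by simp
      fix d :: nat and lam rho0 :: real and a b c :: "real \<Rightarrow> real" and t :: real
      assume d: "3 \<le> d" and lam: "0 < lam" and r0: "0 < rho0" "rho0 < 1/3"
        and tr: "is_traj d lam (rho0 / (real d + lam)) a b c"
        and ne: "{s. 0 \<le> s \<and> rho \<le> a s} \<noteq> {}" and tT: "T2' a rho \<le> t"
      note mb = mu_bounds[OF d lam r0]
      have H: "rho \<le> a t \<and> b t \<le> 1 / (3 * (1 + lam)) \<and>
           (real d - 2) * (c t)\<^sup>2 \<le> 1 / (real d - 2) \<and>
           1 - align d (a t) (b t) (c t)
             \<le> 1 / (2 * rho\<^sup>2) * (1 / (9 * (1 + lam)\<^sup>2) + 1 / (real d - 2))"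
        by (rule core[OF d lam mb(1) mb(2) tr _ _ ne tT]) (use rho in auto)
      from H show "rho \<le> a t" by blast
      from H show "b t \<le> 1 / (3 * (1 + lam))" by blast
      from H show "(real d - 2) * (c t)\<^sup>2 \<le> 1 / (real d - 2)" by blast
      from H show "1 - align d (a t) (b t) (c t)
             \<le> 1 / (2 * rho\<^sup>2) * (1 / (9 * (1 + lam)\<^sup>2) + 1 / (real d - 2))" by blast
    qed
  qed
next
  show "\<forall>rho::real. 0 < rho \<and> rho < 1/12 \<longrightarrow>
      (\<forall>(D::nat \<Rightarrow> nat) (L::nat \<Rightarrow> real) (R0::nat \<Rightarrow> real)
         (A::nat \<Rightarrow> real \<Rightarrow> real) (B::nat \<Rightarrow> real \<Rightarrow> real) (C::nat \<Rightarrow> real \<Rightarrow> real).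
         filterlim D at_top sequentially \<longrightarrow> filterlim L at_top sequentially \<longrightarrow>
         R0 \<longlonglongrightarrow> 0 \<longrightarrow>
         (\<forall>n. 3 \<le> D n \<and> 0 < L n \<and> 0 < R0 n \<and>
              is_traj (D n) (L n) (R0 n / (real (D n) + L n)) (A n) (B n) (C n)) \<longrightarrow>
         (\<forall>e>0. \<forall>\<^sub>F n in sequentially. \<forall>t.
              {s. 0 \<le> s \<and> rho \<le> A n s} \<noteq> {} \<longrightarrow> T2' (A n) rho \<le> t \<longrightarrow>
              1 - align (D n) (A n t) (B n t) (C n t) \<le> e))"
  proof (intro allI impI)
    fix rho :: real and D :: "nat \<Rightarrow> nat" and L R0 :: "nat \<Rightarrow> real"
      and A B C :: "nat \<Rightarrow> real \<Rightarrow> real" and e :: real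
    assume rho: "0 < rho \<and> rho < 1/12" and limD: "filterlim D at_top sequentially"
      and limL: "filterlim L at_top sequentially" and limR: "R0 \<longlonglongrightarrow> 0"
      and all: "\<forall>n. 3 \<le> D n \<and> 0 < L n \<and> 0 < R0 n \<and>
              is_traj (D n) (L n) (R0 n / (real (D n) + L n)) (A n) (B n) (C n)"
      and e: "0 < e"
    define M where "M = 1 / (rho\<^sup>2 * e)"
    have M0: "0 < M" using rho e unfolding M_def by simp
    have ev1: "\<forall>\<^sub>F n in sequentially. R0 n < 1/3"
      using limR by (rule order_tendstoD(2)) simp
    have ev2: "\<forall>\<^sub>F n in sequentially. M \<le> L n"
      using limL filterlim_at_top by blast
    have ev3: "\<forall>\<^sub>F n in sequentially. nat (ceiling (M + 2)) \<le> D n"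
      using limD filterlim_at_top by blast
    show "\<forall>\<^sub>F n in sequentially. \<forall>t.
              {s. 0 \<le> s \<and> rho \<le> A n s} \<noteq> {} \<longrightarrow> T2' (A n) rho \<le> t \<longrightarrow>
              1 - align (D n) (A n t) (B n t) (C n t) \<le> e"
      using ev1 ev2 ev3
    proof eventually_elim
      case (elim n)
      have hn: "3 \<le> D n" "0 < L n" "0 < R0 n"
        "is_traj (D n) (L n) (R0 n / (real (D n) + L n)) (A n) (B n) (C n)"
        using all by auto
      have Dn: "M + 2 \<le> real (D n)"
      proof -
        have "M + 2 \<le> real (nat (ceiling (M + 2)))" by linarith
        also have "\<dots> \<le> real (D n)" using elim(3) by simp
        finally show ?thesis .
      qed
      note mb = mu_bounds[OF hn(1) hn(2) hn(3) elim(1)]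
      show ?case
      proof (intro allI impI)
        fix t assume ne: "{s. 0 \<le> s \<and> rho \<le> A n s} \<noteq> {}" and tT: "T2' (A n) rho \<le> t"
        have H: "rho \<le> A n t \<and> B n t \<le> 1 / (3 * (1 + L n)) \<and>
           (real (D n) - 2) * (C n t)\<^sup>2 \<le> 1 / (real (D n) - 2) \<and>
           1 - align (D n) (A n t) (B n t) (C n t)
             \<le> 1 / (2 * rho\<^sup>2) * (1 / (9 * (1 + L n)\<^sup>2) + 1 / (real (D n) - 2))"
          by (rule core[OF hn(1) hn(2) mb(1) mb(2) hn(4) _ _ ne tT]) (use rho in auto)
        hence H1: "1 - align (D n) (A n t) (B n t) (C n t)
             \<le> 1 / (2 * rho\<^sup>2) * (1 / (9 * (1 + L n)\<^sup>2) + 1 / (real (D n) - 2))" by blast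
        have k: "1 / M = rho\<^sup>2 * e" unfolding M_def by simp
        have b1: "1 / (9 * (1 + L n)\<^sup>2) \<le> rho\<^sup>2 * e"
        proof -
          have "(1 + L n) \<le> 9 * (1 + L n)\<^sup>2" using hn(2)
            by (simp add: power2_eq_square algebra_simps)
          hence "1 / (9 * (1 + L n)\<^sup>2) \<le> 1 / (1 + L n)" using hn(2)
            by (intro divide_left_mono) auto
          also have "\<dots> \<le> 1 / M" using M0 elim(2) by (intro divide_left_mono) auto
          finally show ?thesis using k by simp
        qed
        have b2: "1 / (real (D n) - 2) \<le> rho\<^sup>2 * e"
        proof -
          have "1 / (real (D n) - 2) \<le> 1 / M" using M0 Dn by (intro divide_left_mono) auto
          thus ?thesis using k by simp
        qed
        have r0: "0 < 2 * rho\<^sup>2" using rho by simp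
        have "1 / (2 * rho\<^sup>2) * (1 / (9 * (1 + L n)\<^sup>2) + 1 / (real (D n) - 2))
              \<le> 1 / (2 * rho\<^sup>2) * (2 * (rho\<^sup>2 * e))"
          using b1 b2 r0 by (intro mult_left_mono) auto
        also have "\<dots> = e" using rho by simp
        finally show "1 - align (D n) (A n t) (B n t) (C n t) \<le> e" using H1 by linarith
      qed
    qed
  qed
qed

end
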